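(* Let $(G,\alpha)$ be a finite Hom-group and $H\preceq G$. For all $x,y\in G$, if $xH\cap yH\neq\emptyset$ then $xH=yH$, where $gH=\{gh:h\in H\}$.
   Context: A Hom-group is a tuple $(G,\mu,1,\alpha)$ where $G$ is a set, $\mu:G\times G\to G$ is a binary operation written $\mu(g,h)=gh$, $1\in G$ is a distinguished element, and $\alpha:G\to G$ is a bijection, such that: (1) Hom-associativity: $\alpha(g)(hk)=(gh)\alpha(k)$ for all $g,h,k\in G$; (2) $\alpha(gk)=\alpha(g)\alpha(k)$ for all $g,k$; (3) Hom-unitality: $g1=1g=\alpha(g)$ for all $g$, and $\alpha(1)=1$; (4) for every $g\in G$ there exists $g^{-1}\in G$ with $gg^{-1}=g^{-1}g=1$ (such an inverse is unique). A Hom-subgroup of $(G,\alpha)$ is a subset $H\subseteq G$ such that $H$, with the restriction of the multiplication of $G$, the element $1$, and the restriction of $\alpha$, is itself a Hom-group (in particular $1\in H$, $H$ is closed under multiplication and inverses, and $\alpha$ restricts to a bijection $H\to H$). We write $H\preceq G$. *)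

theory Defs
  imports Main
begin

definition hom_group :: "'a set \<Rightarrow> ('a \<Rightarrow> 'a \<Rightarrow> 'a) \<Rightarrow> 'a \<Rightarrow> ('a \<Rightarrow> 'a) \<Rightarrow> bool" where
  "hom_group G mu e alpha \<longleftrightarrow>
     (\<forall>g\<in>G. \<forall>h\<in>G. mu g h \<in> G) \<and> e \<in> G \<and> bij_betw alpha G G \<and>
     (\<forall>g\<in>G. \<forall>h\<in>G. \<forall>k\<in>G. mu (alpha g) (mu h k) = mu (mu g h) (alpha k)) \<and>
     (\<forall>g\<in>G. \<forall>k\<in>G. alpha (mu g k) = mu (alpha g) (alpha k)) \<and>
     (\<forall>g\<in>G. mu g e = alpha g \<and> mu e g = alpha g) \<and> alpha e = e \<and>
     (\<forall>g\<in>G. \<exists>g'\<in>G. mu g g' = e \<and> mu g' g = e)"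

definition hom_subgroup :: "'a set \<Rightarrow> 'a set \<Rightarrow> ('a \<Rightarrow> 'a \<Rightarrow> 'a) \<Rightarrow> 'a \<Rightarrow> ('a \<Rightarrow> 'a) \<Rightarrow> bool" where
  "hom_subgroup H G mu e alpha \<longleftrightarrow> H \<subseteq> G \<and> hom_group H mu e alpha"

definition left_coset :: "('a \<Rightarrow> 'a \<Rightarrow> 'a) \<Rightarrow> 'a \<Rightarrow> 'a set \<Rightarrow> 'a set" where
  "left_coset mu x H = (\<lambda>h. mu x h) ` H"

end

theory Submission
  imports Defs
begin

lemma left_mult_surj:
  assumes hg: "hom_group H mu e alpha" and fin: "finite H" and a: "a \<in> H"
  shows "(mu a) ` H = H"
proof -
  from hg have cl: "\<forall>g\<in>H. \<forall>h\<in>H. mu g h \<in> H" and bj: "bij_betw alpha H H"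
    and as: "\<forall>g\<in>H. \<forall>h\<in>H. \<forall>k\<in>H. mu (alpha g) (mu h k) = mu (mu g h) (alpha k)"
    and un: "\<forall>g\<in>H. mu g e = alpha g \<and> mu e g = alpha g"
    and inv: "\<forall>g\<in>H. \<exists>g'\<in>H. mu g g' = e \<and> mu g' g = e"
    unfolding hom_group_def by auto
  from inv a obtain a' where a': "a' \<in> H" "mu a' a = e" by blast
  have ia: "inj_on alpha H" using bj by (simp add: bij_betw_def)
  have inj: "inj_on (mu a) H"
  proof (rule inj_onI)
    fix k k' assume k: "k \<in> H" "k' \<in> H" and eq: "mu a k = mu a k'"
    have ak: "alpha k \<in> H" "alpha k' \<in> H" using bj k bij_betw_apply by metis+
    have c1: "mu (alpha a') (mu a k) = mu (mu a' a) (alpha k)" using as a' a k by blast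
    have c2: "mu (alpha a') (mu a k') = mu (mu a' a) (alpha k')" using as a' a k by blast
    have "alpha (alpha k) = mu (alpha a') (mu a k)" using c1 a'(2) un ak by auto
    also have "\<dots> = mu (alpha a') (mu a k')" using eq by simp
    also have "\<dots> = alpha (alpha k')" using c2 a'(2) un ak by auto
    finally have "alpha (alpha k) = alpha (alpha k')" .
    with ak show "k = k'" using ia k by (metis inj_onD)
  qed
  have sub: "(mu a) ` H \<subseteq> H" using cl a by auto
  show ?thesis by (rule endo_inj_surj[OF fin sub inj])
qed

theorem mainTheorem7:
  fixes G H :: "'a set" and mu :: "'a \<Rightarrow> 'a \<Rightarrow> 'a" and e :: 'a and alpha :: "'a \<Rightarrow> 'a"
  assumes "hom_group G mu e alpha" and "finite G"
    and "hom_subgroup H G mu e alpha"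
    and "x \<in> G" and "y \<in> G"
    and "left_coset mu x H \<inter> left_coset mu y H \<noteq> {}"
  shows "left_coset mu x H = left_coset mu y H"
proof -
  have HG: "H \<subseteq> G" and hH: "hom_group H mu e alpha" using assms(3) unfolding hom_subgroup_def by auto
  have finH: "finite H" using HG assms(2) finite_subset by blast
  from assms(1) have cl: "\<forall>g\<in>G. \<forall>h\<in>G. mu g h \<in> G" and bj: "bij_betw alpha G G"
    and as: "\<forall>g\<in>G. \<forall>h\<in>G. \<forall>k\<in>G. mu (alpha g) (mu h k) = mu (mu g h) (alpha k)"
    and hm: "\<forall>g\<in>G. \<forall>k\<in>G. alpha (mu g k) = mu (alpha g) (alpha k)"
    unfolding hom_group_def by auto
  have bjH: "bij_betw alpha H H" using hH unfolding hom_group_def by auto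
  have aH: "alpha ` H = H" using bjH by (simp add: bij_betw_def)
  from assms(6) obtain h1 h2 where h: "h1 \<in> H" "h2 \<in> H" "mu x h1 = mu y h2"
    unfolding left_coset_def by auto
  have key: "(mu (alpha x)) ` H = (mu (alpha y)) ` H"
  proof -
    have "(mu (alpha x)) ` H = (mu (alpha x)) ` ((mu h1) ` H)"
      using left_mult_surj[OF hH finH h(1)] by (rule arg_cong[symmetric])
    also have "\<dots> = (\<lambda>k. mu (mu x h1) (alpha k)) ` H"
      unfolding image_image proof (rule image_cong)
      fix k assume "k \<in> H" then show "mu (alpha x) (mu h1 k) = mu (mu x h1) (alpha k)"
      proof -
        have "k \<in> G" "h1 \<in> G" using \<open>k \<in> H\<close> h(1) HG by auto
        then show ?thesis using as assms(4) by blast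
      qed
    qed simp
    also have "\<dots> = (\<lambda>k. mu (mu y h2) (alpha k)) ` H" using h by simp
    also have "\<dots> = (mu (alpha y)) ` ((mu h2) ` H)"
      unfolding image_image proof (rule image_cong)
      fix k assume "k \<in> H" then show "mu (mu y h2) (alpha k) = mu (alpha y) (mu h2 k)"
      proof -
        have "k \<in> G" "h2 \<in> G" using \<open>k \<in> H\<close> h(2) HG by auto
        then show ?thesis using as assms(5) by simp
      qed
    qed simp
    also have "\<dots> = (mu (alpha y)) ` H"
      using left_mult_surj[OF hH finH h(2)] by (rule arg_cong)
    finally show ?thesis .
  qed
  have img: "alpha ` left_coset mu z H = (mu (alpha z)) ` H" if z: "z \<in> G" for z
  proof -
    have "alpha ` left_coset mu z H = (\<lambda>k. mu (alpha z) (alpha k)) ` H"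
      unfolding left_coset_def image_image proof (rule image_cong)
      fix k assume "k \<in> H" then show "alpha (mu z k) = mu (alpha z) (alpha k)"
      proof -
        have "k \<in> G" using \<open>k \<in> H\<close> HG by auto
        then show ?thesis using hm z by blast
      qed
    qed simp
    also have "\<dots> = (mu (alpha z)) ` (alpha ` H)" by (simp add: image_image)
    finally show ?thesis using aH by simp
  qed
  have sub: "left_coset mu z H \<subseteq> G" if "z \<in> G" for z
    using cl that HG unfolding left_coset_def by auto
  have "inj_on alpha G" using bj by (simp add: bij_betw_def)
  then show ?thesis
    using img[OF assms(4)] img[OF assms(5)] key sub[OF assms(4)] sub[OF assms(5)]
    using inj_on_image_eq_iff[of alpha G "left_coset mu x H" "left_coset mu y H"] by simp
qed

end
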